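(* Under the hypotheses of Proposition 1 (coin $U=\begin{bmatrix} a&b\\c&d\end{bmatrix}$ unitary with $abcd\ne0$, $\Delta=\det U=e^{i\xi}$, $\cos\phi_0=|a|$ with $\phi_0\in(0,\pi/2)$, $\lambda\in\{\pm e^{i(\phi_0+\xi/2)},\pm e^{i(-\phi_0+\xi/2)}\}$, $\gamma=(\lambda+\Delta\bar\lambda)/(2a)$), one has $|\gamma|=1$ and $|\lambda-\Delta\bar\lambda|^2/(4|b|^2)=1$. Moreover, taking $\Psi_0=\Psi$ with $\Psi^L(x)=(A+xB)\gamma^x$, $\Psi^R(x)=\{(A+xB)\frac{\lambda-\Delta\bar\lambda}{2}-\lambda B\}\gamma^{x-1}/b$ ($A,B\in\mathbb{C}$, $|A|+|B|\neq0$), the measure $\mu_n=\phi((U^{(s)})^n\Psi_0)$ satisfies, for all $n\ge0$ and $x\in\mathbb{Z}$, $$\mu_n(x)=2|A+xB|^2-2x|B|^2+\frac{|B|^2-\Re\big(A\bar B(1-\Delta\bar\lambda^2)\big)}{|b|^2}.$$ In particular this $\mu_0$ belongs to $\mathcal{M}_s(U)$.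
   Context: Two-state quantum walk on $\mathbb{Z}$: $(U^{(s)}\Psi)^L(x)=a\Psi^L(x+1)+b\Psi^R(x+1)$, $(U^{(s)}\Psi)^R(x)=c\Psi^L(x-1)+d\Psi^R(x-1)$; $\phi(\Psi)(x)=|\Psi^L(x)|^2+|\Psi^R(x)|^2$; $\mathcal{M}_s(U)=\{\mu\in[0,\infty)^{\mathbb{Z}}\setminus\{0\}:\exists\Psi_0$ with $\phi((U^{(s)})^n\Psi_0)=\mu$ for all $n\ge0\}$. $\Re(z)$ denotes the real part. *)

theory Defs
  imports Complex_Main
begin

type_synonym qstate = "int \<Rightarrow> complex \<times> complex"  (* (Psi^L(x), Psi^R(x)) *)

definition unitary2 :: "complex \<Rightarrow> complex \<Rightarrow> complex \<Rightarrow> complex \<Rightarrow> bool" where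
  "unitary2 a b c d \<longleftrightarrow>
     cnj a * a + cnj c * c = 1 \<and> cnj a * b + cnj c * d = 0 \<and>
     cnj b * a + cnj d * c = 0 \<and> cnj b * b + cnj d * d = 1"

definition qw_step :: "complex \<Rightarrow> complex \<Rightarrow> complex \<Rightarrow> complex \<Rightarrow> qstate \<Rightarrow> qstate" where
  "qw_step a b c d \<Psi> = (\<lambda>x.
     (a * fst (\<Psi> (x + 1)) + b * snd (\<Psi> (x + 1)),
      c * fst (\<Psi> (x - 1)) + d * snd (\<Psi> (x - 1))))"

definition qw_phi :: "qstate \<Rightarrow> int \<Rightarrow> real" where
  "qw_phi \<Psi> x = (cmod (fst (\<Psi> x)))\<^sup>2 + (cmod (snd (\<Psi> x)))\<^sup>2"

definition stat_measures :: "complex \<Rightarrow> complex \<Rightarrow> complex \<Rightarrow> complex \<Rightarrow> (int \<Rightarrow> real) set" where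
  "stat_measures a b c d =
     {\<mu>. (\<forall>x. 0 \<le> \<mu> x) \<and> \<mu> \<noteq> (\<lambda>_. 0) \<and>
          (\<exists>\<Psi>0. \<forall>n. qw_phi ((qw_step a b c d ^^ n) \<Psi>0) = \<mu>)}"

end

theory Submission
  imports Defs
begin

lemma qw_step_scale:
  "qw_step a b c d (\<lambda>x. (k * fst (\<Psi> x), k * snd (\<Psi> x))) =
   (\<lambda>x. (k * fst (qw_step a b c d \<Psi> x), k * snd (qw_step a b c d \<Psi> x)))"
  unfolding qw_step_def by (auto simp: algebra_simps)

lemma eigen_iter:
  assumes "qw_step a b c d \<Psi> = (\<lambda>x. (k * fst (\<Psi> x), k * snd (\<Psi> x)))"
  shows "(qw_step a b c d ^^ n) \<Psi> = (\<lambda>x. (k^n * fst (\<Psi> x), k^n * snd (\<Psi> x)))"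
proof (induction n)
  case 0 then show ?case by simp
next
  case (Suc n)
  have "(qw_step a b c d ^^ Suc n) \<Psi> = qw_step a b c d (\<lambda>x. (k^n * fst (\<Psi> x), k^n * snd (\<Psi> x)))"
    using Suc by simp
  also have "\<dots> = (\<lambda>x. (k^Suc n * fst (\<Psi> x), k^Suc n * snd (\<Psi> x)))"
    unfolding qw_step_scale assms by (simp add: mult_ac)
  finally show ?case .
qed

lemma phi_scale:
  assumes "cmod k = 1"
  shows "qw_phi (\<lambda>x. (k * fst (\<Psi> x), k * snd (\<Psi> x))) = qw_phi \<Psi>"
  unfolding qw_phi_def by (simp add: norm_mult assms)

lemma angle_facts:
  fixes \<sigma> t \<xi> :: real
  assumes "\<sigma> = 1 \<or> \<sigma> = -1"
    and lam_def: "lam = complex_of_real \<sigma> * cis (t + \<xi>/2)"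
    and \<Delta>_def: "\<Delta> = cis \<xi>"
  shows "lam * cnj lam = 1" "\<Delta> * cnj \<Delta> = 1"
    "lam + \<Delta> * cnj lam = 2 * complex_of_real (\<sigma> * cos t) * cis (\<xi>/2)"
    "lam - \<Delta> * cnj lam = 2 * \<i> * complex_of_real (\<sigma> * sin t) * cis (\<xi>/2)"
proof -
  have s2: "\<sigma> * \<sigma> = 1" using assms(1) by auto
  have "lam * cnj lam = complex_of_real (\<sigma>*\<sigma>) * (cis (t + \<xi>/2) * cis (-(t + \<xi>/2)))"
    unfolding lam_def by (simp add: cis_cnj)
  then show "lam * cnj lam = 1" by (simp only: cis_mult s2) simp
  show "\<Delta> * cnj \<Delta> = 1" unfolding \<Delta>_def by (simp add: cis_cnj cis_mult)
  have Dl: "\<Delta> * cnj lam = complex_of_real \<sigma> * cis (\<xi>/2 - t)"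
  proof -
    have "\<Delta> * cnj lam = complex_of_real \<sigma> * (cis \<xi> * cis (-(t + \<xi>/2)))"
      unfolding lam_def \<Delta>_def by (simp add: cis_cnj)
    also have "cis \<xi> * cis (-(t + \<xi>/2)) = cis (\<xi>/2 - t)" by (simp add: cis_mult)
    finally show ?thesis .
  qed
  show "lam + \<Delta> * cnj lam = 2 * complex_of_real (\<sigma> * cos t) * cis (\<xi>/2)"
    unfolding Dl unfolding lam_def
    by (simp add: complex_eq_iff cis.sel cos_add sin_add cos_diff sin_diff algebra_simps)
  show "lam - \<Delta> * cnj lam = 2 * \<i> * complex_of_real (\<sigma> * sin t) * cis (\<xi>/2)"
    unfolding Dl unfolding lam_def
    by (simp add: complex_eq_iff cis.sel cos_add sin_add cos_diff sin_diff algebra_simps)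
qed

lemma cn2: "(complex_of_real (cmod z))^2 = z * cnj z"
  by (simp only: of_real_power[symmetric] complex_norm_square)
lemma re_c: "complex_of_real (Re z) = (z + cnj z)/2"
  by (simp add: complex_add_cnj)

lemma phi_alg:
  fixes A B h lam D b :: complex and x :: int
  assumes l1: "lam*cnj lam = 1" and d1: "D*cnj D = 1" and hd: "h = (lam - D*cnj lam)/2"
    and hb: "h * cnj h = b*cnj b" and b0: "b\<noteq>0"
  shows "(cmod (A + of_int x * B))^2 + (cmod ((A + of_int x * B)*h - lam*B))^2/(cmod b)^2
    = 2*(cmod (A + of_int x * B))^2 - 2*of_int x*(cmod B)^2
      + ((cmod B)^2 - Re(A*cnj B*(1-D*(cnj lam)^2)))/(cmod b)^2"
proof -
  define X where "X = (of_int x :: complex)"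
  have cX: "cnj X = X" unfolding X_def by simp
  have bb: "b * cnj b \<noteq> 0" using b0 by simp
  have hd2: "2*h = lam - D*cnj lam" using hd by (simp add: mult.commute)
  have hc2: "2*cnj h = cnj lam - cnj D*lam" using arg_cong[OF hd2, of cnj] by simp
  have key0: "2*((A + X*B)*(cnj A + X * cnj B)*(b*cnj b) + ((A + X*B)*h - lam*B)*((cnj A + X*cnj B) * cnj h - cnj lam * cnj B))
     = 2*((2*(A + X*B)*(cnj A + X * cnj B) - 2*X*B*cnj B)*(b*cnj b) + B*cnj B) - (A*cnj B*(1-D*cnj lam^2) + cnj A * B*(1-cnj D*lam^2))"
    using l1 d1 hd2 hc2 hb by algebra
  show ?thesis
    apply (subst of_real_eq_iff[where 'a=complex, symmetric])
    apply (simp only: of_real_add of_real_diff of_real_mult of_real_divide of_real_power cn2 re_c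
       of_real_numeral of_real_of_int_eq flip: X_def)
    apply (simp only: complex_cnj_add complex_cnj_mult complex_cnj_diff cX complex_cnj_one complex_cnj_power complex_cnj_divide complex_cnj_numeral)
    apply (simp add: divide_simps bb b0)
    using key0 by algebra
qed
lemma eig_alg:
  fixes a b c d lam h A B X \<gamma> g :: complex
  assumes Lh: "lam = a*\<gamma> + h" and K6: "d = a*\<gamma>^2" and bc: "b*c = h^2" and b0: "b \<noteq> 0"
  shows "a * ((A + (X+1)*B) * (g * \<gamma>)) + b * (((A + (X+1)*B) * h - lam*B) * g / b) = lam * ((A + X*B) * g)"
    "c * ((A + (X-1)*B) * (g * \<gamma>)) + d * (((A + (X-1)*B) * h - lam*B) * g / b) = lam * (((A + X*B) * h - lam*B) * (g * \<gamma>) / b)"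
proof -
  show "a * ((A + (X+1)*B) * (g * \<gamma>)) + b * (((A + (X+1)*B) * h - lam*B) * g / b) = lam * ((A + X*B) * g)"
    using b0 apply (simp add: field_simps) using Lh by algebra
  show "c * ((A + (X-1)*B) * (g * \<gamma>)) + d * (((A + (X-1)*B) * h - lam*B) * g / b) = lam * (((A + X*B) * h - lam*B) * (g * \<gamma>) / b)"
    using b0 apply (simp add: field_simps) using Lh K6 bc by algebra
qed

theorem corollary1:
  fixes a b c d lam A B :: complex and \<xi> \<phi>0 :: real
  assumes "unitary2 a b c d"
    and "a * b * c * d \<noteq> 0"
    and "a * d - b * c = cis \<xi>"
    and "0 < \<phi>0" "\<phi>0 < pi / 2" "cos \<phi>0 = cmod a"
    and "lam \<in> {cis (\<phi>0 + \<xi> / 2), - cis (\<phi>0 + \<xi> / 2),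
               cis (- \<phi>0 + \<xi> / 2), - cis (- \<phi>0 + \<xi> / 2)}"
    and "cmod A + cmod B \<noteq> 0"
  defines "\<Delta> \<equiv> a * d - b * c"
  defines "\<gamma> \<equiv> (lam + \<Delta> * cnj lam) / (2 * a)"
  defines "\<Psi>0 \<equiv> (\<lambda>x::int.
      ((A + of_int x * B) * \<gamma> powi x,
       ((A + of_int x * B) * ((lam - \<Delta> * cnj lam) / 2) - lam * B) * \<gamma> powi (x - 1) / b))"
  shows "cmod \<gamma> = 1 \<and>
    (cmod (lam - \<Delta> * cnj lam))\<^sup>2 / (4 * (cmod b)\<^sup>2) = 1 \<and>
    (\<forall>n::nat. \<forall>x::int. qw_phi ((qw_step a b c d ^^ n) \<Psi>0) x =
           2 * (cmod (A + of_int x * B))\<^sup>2 - 2 * of_int x * (cmod B)\<^sup>2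
           + ((cmod B)\<^sup>2 - Re (A * cnj B * (1 - \<Delta> * (cnj lam)\<^sup>2))) / (cmod b)\<^sup>2) \<and>
    qw_phi \<Psi>0 \<in> stat_measures a b c d"
proof -
  note U = assms(1)[unfolded unitary2_def]
  have a0: "a \<noteq> 0" and b0: "b \<noteq> 0" and c0: "c \<noteq> 0" and d0: "d \<noteq> 0" using assms(2) by auto
  have Dcis: "\<Delta> = cis \<xi>" using assms(3) \<Delta>_def by simp
  have na: "(cmod a)^2 + (cmod c)^2 = 1"
  proof -
    have "complex_of_real ((cmod a)^2 + (cmod c)^2) = 1" using U by (simp only: of_real_add complex_norm_square) (simp add: mult.commute)
    thus ?thesis using of_real_eq_1_iff by blast
  qed
  have nb: "(cmod b)^2 + (cmod d)^2 = 1"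
  proof -
    have "complex_of_real ((cmod b)^2 + (cmod d)^2) = 1" using U by (simp only: of_real_add complex_norm_square) (simp add: mult.commute)
    thus ?thesis using of_real_eq_1_iff by blast
  qed
  have e2: "cnj a * b = - cnj c * d" using U by (simp add: eq_neg_iff_add_eq_0)
  have "cmod a * cmod b = cmod c * cmod d" using arg_cong[OF e2, of cmod] by (simp add: norm_mult)
  hence "(cmod a)^2 * (cmod b)^2 = (cmod c)^2 * (cmod d)^2" by (metis power_mult_distrib)
  hence ab: "(cmod a)^2 + (cmod b)^2 = 1" using na nb
    by (smt (verit, ccfv_threshold) left_diff_distrib mult.commute mult_cancel_left1 right_diff_distrib)
  have dD: "d = \<Delta> * cnj a"
  proof -
    have "\<Delta> * cnj a = a * cnj a * d - b * c * cnj a" unfolding \<Delta>_def by (simp add: algebra_simps)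
    also have "b * c * cnj a = - c * cnj c * d" using e2 by (metis mult.assoc mult.commute mult_minus_left)
    also have "a * cnj a * d - - c * cnj c * d = (a * cnj a + c * cnj c) * d" by (simp add: algebra_simps)
    also have "a * cnj a + c * cnj c = 1" using U by (simp add: mult.commute)
    finally show ?thesis by simp
  qed
  obtain \<sigma> t where sg: "\<sigma> = 1 \<or> \<sigma> = -1" and tt: "t = \<phi>0 \<or> t = - \<phi>0"
    and lamE: "lam = complex_of_real \<sigma> * cis (t + \<xi>/2)"
  proof -
    have "\<exists>\<sigma> t. (\<sigma> = 1 \<or> \<sigma> = -1) \<and> (t = \<phi>0 \<or> t = - \<phi>0) \<and>
            lam = complex_of_real \<sigma> * cis (t + \<xi>/2)"
      using assms(7)
    proof (elim insertE emptyE)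
      assume "lam = cis (\<phi>0 + \<xi> / 2)" thus ?thesis by (intro exI[of _ 1] exI[of _ \<phi>0]) simp
    next
      assume "lam = - cis (\<phi>0 + \<xi> / 2)" thus ?thesis by (intro exI[of _ "-1"] exI[of _ \<phi>0]) simp
    next
      assume "lam = cis (- \<phi>0 + \<xi> / 2)" thus ?thesis by (intro exI[of _ 1] exI[of _ "-\<phi>0"]) simp
    next
      assume "lam = - cis (- \<phi>0 + \<xi> / 2)" thus ?thesis by (intro exI[of _ "-1"] exI[of _ "-\<phi>0"]) simp
    qed
    thus ?thesis using that by blast
  qed
  have cost: "cos t = cmod a" using tt assms(6) by auto
  have sint: "(sin t)^2 = (cmod b)^2" using cost ab sin_cos_squared_add[of t] by simp
  note AF = angle_facts[OF sg lamE Dcis]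
  define h where "h = (lam - \<Delta> * cnj lam) / 2"
  have s2: "\<sigma> * \<sigma> = 1" using sg by auto
  have E1: "cis (\<xi>/2) * cnj (cis (\<xi>/2)) = 1" by (simp add: cis_cnj cis_mult)
  have K1: "lam * cnj lam = 1" by (rule AF(1))
  have K4: "\<Delta> * cnj \<Delta> = 1" by (rule AF(2))
  have K5: "2 * a * \<gamma> = lam + \<Delta> * cnj lam" unfolding \<gamma>_def using a0 by simp
  have K2: "h * cnj h = b * cnj b"
  proof -
    have "h * cnj h = complex_of_real ((\<sigma> * \<sigma>) * (sin t)^2) * (cis (\<xi>/2) * cnj (cis (\<xi>/2)))"
      unfolding h_def AF(4) by (simp add: power2_eq_square algebra_simps)
    also have "\<dots> = complex_of_real ((cmod b)^2)" using s2 sint E1 by simp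
    finally show ?thesis by (simp only: complex_norm_square)
  qed
  have S2: "(lam + \<Delta> * cnj lam)^2 = 4 * \<Delta> * (a * cnj a)"
  proof -
    have "(lam + \<Delta> * cnj lam)^2 = 4 * complex_of_real ((\<sigma> * \<sigma>) * (cos t)^2) * (cis (\<xi>/2) * cis (\<xi>/2))"
      unfolding AF(3) by (simp add: power2_eq_square algebra_simps)
    also have "cis (\<xi>/2) * cis (\<xi>/2) = \<Delta>" using Dcis by (simp add: cis_mult)
    moreover have "(complex_of_real (cmod a))^2 = a * cnj a"
      by (simp only: of_real_power[symmetric] complex_norm_square)
    ultimately show ?thesis using s2 cost by (simp add: mult.commute)
  qed
  have K6: "d = a * \<gamma>^2"
  proof -
    have "4 * a * (a * \<gamma>^2) = (2*a*\<gamma>)^2" by (simp add: power2_eq_square algebra_simps)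
    also have "\<dots> = 4 * a * d" unfolding K5 S2 dD by (simp add: algebra_simps)
    finally show ?thesis using a0 by simp
  qed
  have g0: "\<gamma> \<noteq> 0" using K6 d0 by auto
  have G1: "cmod \<gamma> = 1"
  proof -
    have "cmod (lam + \<Delta> * cnj lam) = 2 * cmod a"
      unfolding AF(3) using sg cost by (auto simp: norm_mult)
    thus ?thesis unfolding \<gamma>_def using a0 by (simp add: norm_divide norm_mult)
  qed
  have G2: "(cmod (lam - \<Delta> * cnj lam))\<^sup>2 / (4 * (cmod b)\<^sup>2) = 1"
  proof -
    have "(cmod (lam - \<Delta> * cnj lam))\<^sup>2 = 4 * (sin t)^2"
      unfolding AF(4) using sg by (auto simp: norm_mult power_mult_distrib)
    thus ?thesis using sint b0 by simp
  qed
  have hd2: "2*h = lam - \<Delta> * cnj lam" unfolding h_def by simp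
  have Lh: "lam = a*\<gamma> + h" using K5 hd2 by algebra
  have Dd: "\<Delta> = a * d - b * c" by (simp add: \<Delta>_def)
  have bch: "b*c = h^2" using Dd K1 K5 hd2 K6 by algebra
  have eig: "qw_step a b c d \<Psi>0 = (\<lambda>x. (lam * fst (\<Psi>0 x), lam * snd (\<Psi>0 x)))"
  proof (rule ext)
    fix x :: int
    have Q1: "\<gamma> powi (x+1) = \<gamma> powi x * \<gamma>" using g0 by (simp add: power_int_add_1)
    have Q2: "\<gamma> powi (x-1) = \<gamma> powi (x-1-1) * \<gamma>" using g0 power_int_add_1[of \<gamma> "x-1-1"] by simp
    note E = eig_alg[OF Lh K6 bch b0, where A=A and B=B and X="of_int x"]
    show "qw_step a b c d \<Psi>0 x = (lam * fst (\<Psi>0 x), lam * snd (\<Psi>0 x))"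
      unfolding qw_step_def \<Psi>0_def h_def[symmetric] using E[where g="\<gamma> powi x"] E[where g="\<gamma> powi (x-1-1)"]
      by (simp add: Q1 Q2)
  qed
  have phi: "qw_phi \<Psi>0 x =
           2 * (cmod (A + of_int x * B))\<^sup>2 - 2 * of_int x * (cmod B)\<^sup>2
           + ((cmod B)\<^sup>2 - Re (A * cnj B * (1 - \<Delta> * (cnj lam)\<^sup>2))) / (cmod b)\<^sup>2" for x
  proof -
    have n1: "cmod (\<gamma> powi k) = 1" for k by (simp add: norm_power_int G1)
    have "qw_phi \<Psi>0 x = (cmod (A + of_int x * B))^2 + (cmod ((A + of_int x * B)*h - lam*B))^2/(cmod b)^2"
      unfolding qw_phi_def \<Psi>0_def h_def[symmetric] by (simp add: norm_mult norm_divide n1 power_divide)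
    also have "\<dots> = 2 * (cmod (A + of_int x * B))\<^sup>2 - 2 * of_int x * (cmod B)\<^sup>2
           + ((cmod B)\<^sup>2 - Re (A * cnj B * (1 - \<Delta> * (cnj lam)\<^sup>2))) / (cmod b)\<^sup>2"
      by (rule phi_alg[OF K1 K4 h_def K2 b0])
    finally show ?thesis .
  qed
  have lam1: "cmod lam = 1" using lamE sg by (auto simp: norm_mult)
  have iter: "qw_phi ((qw_step a b c d ^^ n) \<Psi>0) = qw_phi \<Psi>0" for n
    unfolding eigen_iter[OF eig] by (rule phi_scale) (simp add: norm_power lam1)
  have nz: "qw_phi \<Psi>0 \<noteq> (\<lambda>_. 0)"
  proof
    assume Z: "qw_phi \<Psi>0 = (\<lambda>_. 0)"
    have f0: "A + of_int x * B = 0" for x :: int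
    proof -
      have "(cmod (fst (\<Psi>0 x)))^2 + (cmod (snd (\<Psi>0 x)))^2 = 0"
        using fun_cong[OF Z, of x] by (simp add: qw_phi_def)
      hence "cmod (fst (\<Psi>0 x)) = 0"
        by (smt (verit) zero_le_power2 power2_eq_square mult_eq_0_iff)
      hence "(A + of_int x * B) * \<gamma> powi x = 0" by (simp add: \<Psi>0_def)
      thus ?thesis using g0 by (simp add: power_int_eq_0_iff)
    qed
    have "A = 0" using f0[of 0] by simp
    moreover have "B = 0" using f0[of 1] \<open>A = 0\<close> by simp
    ultimately show False using assms(8) by simp
  qed
  have SM: "qw_phi \<Psi>0 \<in> stat_measures a b c d"
    unfolding stat_measures_def using nz iter by (auto simp: qw_phi_def)
  show ?thesis
    apply (intro conjI allI)
       apply (rule G1)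
      apply (rule G2)
     apply (simp only: iter phi)
    apply (rule SM)
    done
qed

end
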